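(* Let $\alpha\ge1$ and $\phi\in[0,2\pi_\alpha)\setminus\{\pi_\alpha/2,3\pi_\alpha/2\}$. The only solution $\zeta$ with $|\zeta|<\pi_\alpha$ of the equation $$\tan_\alpha(\zeta+\phi)-\tan_\alpha(\phi)=\zeta$$ is $\zeta=0$.
   Context: For real $a\ge1$: $\pi_a=2\int_0^1(1-t^{2a})^{-1/2}dt$; $\sin_a$ is the inverse of $s\mapsto\int_0^s(1-t^{2a})^{-1/2}dt$ on $[0,\pi_a/2]$, extended by $\sin_a(s)=\sin_a(\pi_a-s)$ to $[0,\pi_a]$, to an odd function on $[-\pi_a,\pi_a]$ and $2\pi_a$-periodically to $\mathbb{R}$; $\cos_a=\sin_a'$ and $\tan_a=\sin_a/\cos_a$ (defined where $\cos_a\neq0$). *)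

theory Defs
  imports "HOL-Analysis.Analysis"
begin

text \<open>Integrand (1 - t^(2a))^(-1/2) on [0,1]; the (improper) integral is the
Henstock-Kurzweil integral, which coincides with the Lebesgue integral for this
nonnegative integrand. At t = 1 the value is irrelevant (a null set).\<close>
definition gen_integrand :: "real \<Rightarrow> real \<Rightarrow> real" where
  "gen_integrand a t = (1 - t powr (2 * a)) powr (-1/2)"

definition gen_F :: "real \<Rightarrow> real \<Rightarrow> real" where
  "gen_F a s = integral {0..s} (gen_integrand a)"

definition pi_gen :: "real \<Rightarrow> real" where
  "pi_gen a = 2 * integral {0..1} (gen_integrand a)"

definition sin_gen_base :: "real \<Rightarrow> real \<Rightarrow> real" where
  "sin_gen_base a s = (THE y. 0 \<le> y \<and> y \<le> 1 \<and> gen_F a y = s)"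

definition sin_gen_half :: "real \<Rightarrow> real \<Rightarrow> real" where
  "sin_gen_half a s = (if s \<le> pi_gen a / 2 then sin_gen_base a s else sin_gen_base a (pi_gen a - s))"

text \<open>Odd extension to [-pi_a, pi_a] and 2 pi_a-periodic extension to the reals:
r is the representative of s in [-pi_a, pi_a).\<close>
definition sin_gen :: "real \<Rightarrow> real \<Rightarrow> real" where
  "sin_gen a s = (let p = pi_gen a; r = s - 2 * p * of_int \<lfloor>(s + p) / (2 * p)\<rfloor>
                  in sgn r * sin_gen_half a \<bar>r\<bar>)"

definition cos_gen :: "real \<Rightarrow> real \<Rightarrow> real" where
  "cos_gen a s = deriv (sin_gen a) s"

definition tan_gen :: "real \<Rightarrow> real \<Rightarrow> real" where
  "tan_gen a s = sin_gen a s / cos_gen a s"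

end

theory Submission
  imports Defs
begin

lemma deriv_limit:
  fixes f g :: "real \<Rightarrow> real"
  assumes d: "d > 0" and cont: "isCont f x"
    and der: "\<And>t. t \<noteq> x \<Longrightarrow> \<bar>t - x\<bar> < d \<Longrightarrow> DERIV f t :> g t"
    and lim: "(g \<longlongrightarrow> L) (at x)"
  shows "DERIV f x :> L"
  unfolding has_field_derivative_iff
proof (rule LIM_I)
  fix e :: real assume e: "0 < e"
  obtain s where s: "s > 0" "\<forall>t. t \<noteq> x \<and> norm (t - x) < s \<longrightarrow> norm (g t - L) < e"
    using LIM_D[OF lim e] by blast
  define \<delta> where "\<delta> = min s d"
  have \<delta>: "\<delta> > 0" "\<delta> \<le> s" "\<delta> \<le> d" using s d by (auto simp: \<delta>_def)
  have "\<forall>y. y \<noteq> x \<and> norm (y - x) < \<delta> \<longrightarrow> norm ((f y - f x) / (y - x) - L) < e"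
  proof (intro allI impI)
    fix y assume y: "y \<noteq> x \<and> norm (y - x) < \<delta>"
    define lo where "lo = min x y"
    define hi where "hi = max x y"
    have lohi: "lo < hi" using y by (auto simp: lo_def hi_def)
    have inI: "\<And>t. lo \<le> t \<Longrightarrow> t \<le> hi \<Longrightarrow> \<bar>t - x\<bar> < d"
      using y \<delta> by (auto simp: lo_def hi_def)
    have "continuous_on {lo..hi} f"
    proof (rule continuous_at_imp_continuous_on, intro ballI)
      fix t assume t: "t \<in> {lo..hi}"
      show "isCont f t"
      proof (cases "t = x")
        case True then show ?thesis using cont by simp
      next
        case False then show ?thesis using der[of t] inI[of t] t DERIV_isCont by auto
      qed
    qed
    moreover have "\<And>t. lo < t \<Longrightarrow> t < hi \<Longrightarrow> f differentiable (at t)"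
    proof -
      fix t assume t: "lo < t" "t < hi"
      have "t \<noteq> x" using t by (auto simp: lo_def hi_def)
      then show "f differentiable (at t)"
        using der[of t] inI[of t] t real_differentiable_def by force
    qed
    ultimately obtain l z where z: "lo < z" "z < hi" "DERIV f z :> l" "f hi - f lo = (hi - lo) * l"
      using MVT[OF lohi] by blast
    have zx: "z \<noteq> x" "\<bar>z - x\<bar> < \<delta>" using z y by (auto simp: lo_def hi_def)
    have "l = g z" using DERIV_unique[OF z(3) der[of z]] zx \<delta> by simp
    moreover have "(f y - f x) / (y - x) = l"
    proof (cases "x < y")
      case True then show ?thesis using z(4) by (simp add: lo_def hi_def field_simps)
    next
      case False then have "y < x" using y by simp
      then show ?thesis using z(4) by (simp add: lo_def hi_def field_simps)
    qed
    ultimately show "norm ((f y - f x) / (y - x) - L) < e" using s zx \<delta> by simp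
  qed
  then show "\<exists>s>0. \<forall>y. y \<noteq> x \<and> norm (y - x) < s \<longrightarrow> norm ((f y - f x) / (y - x) - L) < e"
    using \<delta> by blast
qed

lemma g_int: "(\<lambda>t::real. (1 - t) powr (-1/2)) integrable_on {0..1}"
proof -
  have "((\<lambda>t::real. (1 - t) powr (-1/2)) has_integral ((-2 * sqrt (1 - 1)) - (-2 * sqrt (1 - 0)))) {0..1}"
  proof (rule fundamental_theorem_of_calculus_interior)
    show "continuous_on {0..1::real} (\<lambda>t. -2 * sqrt (1 - t))"
      by (intro continuous_intros)
    fix x :: real assume x: "x \<in> {0<..<1}"
    have "((\<lambda>t. -2 * sqrt (1 - t)) has_real_derivative inverse (sqrt (1 - x))) (at x)"
      using x by (auto intro!: derivative_eq_intros)
    moreover have "inverse (sqrt (1 - x)) = (1 - x) powr (-1/2)"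
      using x by (simp add: powr_minus powr_half_sqrt[symmetric])
    ultimately show "((\<lambda>t. -2 * sqrt (1 - t)) has_vector_derivative (1 - x) powr (-1/2)) (at x)"
      by (simp add: has_real_derivative_iff_has_vector_derivative)
  qed simp
  then show ?thesis by blast
qed

locale gs =
  fixes a :: real
  assumes a1: "1 \<le> a"
begin

abbreviation "ff \<equiv> gen_integrand a"
abbreviation "FF \<equiv> gen_F a"

lemma pw_lt1: "0 \<le> t \<Longrightarrow> t < 1 \<Longrightarrow> t powr (2*a) < 1"
  using powr_less_mono2[of "2*a" t 1] a1 by simp

lemma pw_nonneg: "0 \<le> t powr (2*a)" by simp

lemma f_eq: "0 \<le> t \<Longrightarrow> t < 1 \<Longrightarrow> ff t = inverse (sqrt (1 - t powr (2*a)))"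
  using pw_lt1[of t] unfolding gen_integrand_def
  by (simp add: powr_minus powr_half_sqrt[symmetric])

lemma f_ge1: "0 \<le> t \<Longrightarrow> t < 1 \<Longrightarrow> 1 \<le> ff t"
proof -
  assume t: "0 \<le> t" "t < 1"
  have "0 < sqrt (1 - t powr (2*a))" using pw_lt1[OF t] by simp
  moreover have "sqrt (1 - t powr (2*a)) \<le> 1" using pw_nonneg[of t] by simp
  ultimately show ?thesis using f_eq[OF t] by (simp add: one_le_inverse)
qed

lemma f_mono: "0 \<le> s \<Longrightarrow> s < t \<Longrightarrow> t < 1 \<Longrightarrow> ff s < ff t"
proof -
  assume st: "0 \<le> s" "s < t" "t < 1"
  have "s powr (2*a) < t powr (2*a)" using powr_less_mono2[of "2*a" s t] st a1 by simp
  then have "0 < sqrt (1 - t powr (2*a))" "sqrt (1 - t powr (2*a)) < sqrt (1 - s powr (2*a))"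
    using pw_lt1[of t] st by auto
  then show ?thesis using f_eq[of s] f_eq[of t] st
    by (simp add: less_imp_inverse_less)
qed

lemma f_nonneg: "0 \<le> t \<Longrightarrow> t \<le> 1 \<Longrightarrow> 0 \<le> ff t"
  unfolding gen_integrand_def by simp

lemma f_le_g: "0 \<le> t \<Longrightarrow> t \<le> 1 \<Longrightarrow> ff t \<le> (1 - t) powr (-1/2)"
proof -
  assume t: "0 \<le> t" "t \<le> 1"
  have "t powr (2*a) \<le> t powr 1" using powr_mono'[of 1 "2*a" t] t a1 by simp
  then have A: "1 - t \<le> 1 - t powr (2*a)" using t by simp
  show ?thesis
  proof (cases "t = 1")
    case True then show ?thesis by (simp add: gen_integrand_def)
  next
    case False
    then have t1: "0 < 1 - t" using t by simp
    have "(1 - t powr (2*a)) powr (-1/2) \<le> (1 - t) powr (-1/2)"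
      by (rule powr_mono2') (use t1 A in auto)
    then show ?thesis by (simp add: gen_integrand_def)
  qed
qed

lemma f_cont: "b < 1 \<Longrightarrow> continuous_on {0..b} ff"
proof -
  assume b: "b < 1"
  have c1: "continuous_on {0..b} (\<lambda>t::real. t powr (2*a))"
    by (rule continuous_on_powr') (use a1 in \<open>auto intro: continuous_intros\<close>)
  have pos: "\<forall>t\<in>{0..b}. 0 < 1 - t powr (2*a)" using b pw_lt1 by auto
  have c2: "continuous_on {0..b} (\<lambda>t. 1 - t powr (2*a))" by (rule continuous_on_diff[OF continuous_on_const c1])
  have "continuous_on {0..b} (\<lambda>t. (1 - t powr (2*a)) powr (-1/2))"
    by (rule continuous_on_powr'[OF c2 continuous_on_const]) (use pos in auto)
  then show ?thesis unfolding gen_integrand_def .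
qed

lemma f_meas: "ff \<in> borel_measurable (lebesgue_on {0..1})"
proof -
  have "ff \<in> borel_measurable borel"
    unfolding gen_integrand_def by measurable
  then show ?thesis
    by (simp add: measurable_completion measurable_restrict_space1)
qed

lemma f_int: "ff integrable_on {0..1}"
  by (rule measurable_bounded_by_integrable_imp_integrable[OF f_meas g_int])
     (use f_nonneg f_le_g in auto)

lemma f_int_sub: "0 \<le> x \<Longrightarrow> y \<le> 1 \<Longrightarrow> ff integrable_on {x..y}"
  by (rule integrable_on_subinterval[OF f_int]) auto

lemma F_cont: "continuous_on {0..1} FF"
  unfolding gen_F_def by (rule indefinite_integral_continuous_1[OF f_int])

lemma F_diff: "0 < y \<Longrightarrow> y < 1 \<Longrightarrow> DERIV FF y :> ff y"
proof -
  assume y: "0 < y" "y < 1"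
  define b where "b = (y + 1) / 2"
  have b: "y < b" "b < 1" using y by (auto simp: b_def)
  have "((\<lambda>x. integral {0..x} ff) has_real_derivative ff y) (at y within {0..b})"
    by (rule integral_has_real_derivative[OF f_cont]) (use y b in auto)
  then show ?thesis
    unfolding gen_F_def using at_within_Icc_at[of 0 y b] y b by simp
qed

lemma F_0: "FF 0 = 0"
  unfolding gen_F_def by simp

lemma F_diffI: "0 \<le> x \<Longrightarrow> x \<le> y \<Longrightarrow> y \<le> 1 \<Longrightarrow> FF y - FF x = integral {x..y} ff"
  unfolding gen_F_def using Henstock_Kurzweil_Integration.integral_combine[where a=0 and c=x and b=y and f=ff] f_int_sub[of 0 y] by simp

lemma F_ge: "0 \<le> x \<Longrightarrow> x \<le> y \<Longrightarrow> y < 1 \<Longrightarrow> y - x \<le> FF y - FF x"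
proof -
  assume xy: "0 \<le> x" "x \<le> y" "y < 1"
  have "integral {x..y} (\<lambda>_. 1) \<le> integral {x..y} ff"
    by (rule integral_le) (use xy f_int_sub f_ge1 in auto)
  then show ?thesis using F_diffI[of x y] xy by simp
qed

lemma F_le: "0 \<le> x \<Longrightarrow> x \<le> y \<Longrightarrow> y < 1 \<Longrightarrow> FF y - FF x \<le> (y - x) * ff y"
proof -
  assume xy: "0 \<le> x" "x \<le> y" "y < 1"
  have "integral {x..y} ff \<le> integral {x..y} (\<lambda>_. ff y)"
  proof (rule integral_le)
    show "ff integrable_on {x..y}" using f_int_sub xy by simp
    show "(\<lambda>_. ff y) integrable_on {x..y}" by (rule integrable_const_ivl)
    fix t assume "t \<in> {x..y}"
    then show "ff t \<le> ff y" using f_mono[of t y] xy by (cases "t = y") auto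
  qed
  moreover have "integral {x..y} (\<lambda>_. ff y) = (y - x) * ff y" using xy by simp
  ultimately show ?thesis using F_diffI[of x y] xy by linarith
qed

lemma F_mono0: "0 \<le> x \<Longrightarrow> x \<le> y \<Longrightarrow> y \<le> 1 \<Longrightarrow> FF x \<le> FF y"
proof -
  assume xy: "0 \<le> x" "x \<le> y" "y \<le> 1"
  have "0 \<le> integral {x..y} ff"
    by (rule integral_nonneg) (use xy f_int_sub f_nonneg in auto)
  then show ?thesis using F_diffI[of x y] xy by simp
qed

lemma F_mono: "0 \<le> x \<Longrightarrow> x < y \<Longrightarrow> y \<le> 1 \<Longrightarrow> FF x < FF y"
proof -
  assume xy: "0 \<le> x" "x < y" "y \<le> 1"
  define m where "m = (x + y) / 2"
  have m: "x < m" "m < y" "m < 1" using xy by (auto simp: m_def)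
  have "FF x < FF m" using F_ge[of x m] m xy by simp
  also have "\<dots> \<le> FF y" using F_mono0[of m y] m xy by simp
  finally show ?thesis .
qed

end

context gs begin

abbreviation "pp \<equiv> FF 1"
abbreviation "bb \<equiv> sin_gen_base a"

lemma PP_eq: "pi_gen a = 2 * pp"
  unfolding pi_gen_def gen_F_def by simp

lemma p_pos: "0 < pp"
  using F_mono[of 0 1] F_0 by simp

lemma F_range: "0 \<le> y \<Longrightarrow> y \<le> 1 \<Longrightarrow> 0 \<le> FF y \<and> FF y \<le> pp"
  using F_mono0[of 0 y] F_mono0[of y 1] F_0 by simp

lemma F_inj: "0 \<le> x \<Longrightarrow> x \<le> 1 \<Longrightarrow> 0 \<le> y \<Longrightarrow> y \<le> 1 \<Longrightarrow> FF x = FF y \<Longrightarrow> x = y"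
  using F_mono[of x y] F_mono[of y x] by (cases x y rule: linorder_cases) auto

lemma base_ex: assumes "0 \<le> s" "s \<le> pp" shows "0 \<le> bb s \<and> bb s \<le> 1 \<and> FF (bb s) = s"
proof -
  obtain y where y: "0 \<le> y" "y \<le> 1" "FF y = s"
    using IVT'[of FF 0 s 1] F_cont F_0 assms by auto
  have "\<exists>!y. 0 \<le> y \<and> y \<le> 1 \<and> FF y = s"
    using y F_inj by blast
  then show ?thesis unfolding sin_gen_base_def by (rule theI')
qed

lemma base_F: "0 \<le> y \<Longrightarrow> y \<le> 1 \<Longrightarrow> bb (FF y) = y"
  using base_ex[of "FF y"] F_range[of y] F_inj[of "bb (FF y)" y] by auto

lemma base_0: "bb 0 = 0"
  using base_F[of 0] F_0 by simp

lemma base_p: "bb pp = 1"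
  using base_F[of 1] by simp

lemma base_mono: "0 \<le> s \<Longrightarrow> s < t \<Longrightarrow> t \<le> pp \<Longrightarrow> bb s < bb t"
proof (rule ccontr)
  assume st: "0 \<le> s" "s < t" "t \<le> pp" and "\<not> bb s < bb t"
  then have "bb t \<le> bb s" by simp
  then have "FF (bb t) \<le> FF (bb s)"
    using F_mono0[of "bb t" "bb s"] base_ex[of s] base_ex[of t] st by auto
  then show False using base_ex[of s] base_ex[of t] st by auto
qed

lemma base_lt1: "0 \<le> s \<Longrightarrow> s < pp \<Longrightarrow> bb s < 1"
  using base_mono[of s pp] base_p by simp

lemma base_pos: "0 < s \<Longrightarrow> s \<le> pp \<Longrightarrow> 0 < bb s"
  using base_mono[of 0 s] base_0 by simp

lemma F_image: "FF ` {0..1} = {0..pp}"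
proof
  show "FF ` {0..1} \<subseteq> {0..pp}" using F_range by auto
  show "{0..pp} \<subseteq> FF ` {0..1}"
  proof
    fix s assume "s \<in> {0..pp}"
    then have "bb s \<in> {0..1}" "FF (bb s) = s" using base_ex[of s] by auto
    then show "s \<in> FF ` {0..1}" by force
  qed
qed

lemma base_cont: "continuous_on {0..pp} bb"
proof -
  have "continuous_on (FF ` {0..1}) bb"
    by (rule continuous_on_inv[OF F_cont]) (use base_F in auto)
  then show ?thesis using F_image by simp
qed

lemma base_deriv: assumes "0 < s" "s < pp"
  shows "DERIV bb s :> sqrt (1 - bb s powr (2*a))"
proof -
  have y: "0 < bb s" "bb s < 1" using base_pos[of s] base_lt1[of s] assms by auto
  have "DERIV bb s :> inverse (ff (bb s))"
  proof (rule DERIV_inverse_function[where f=FF and a=0 and b=pp])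
    show "DERIV FF (bb s) :> ff (bb s)" using F_diff y by simp
    show "ff (bb s) \<noteq> 0" using f_ge1[of "bb s"] y by simp
    show "0 < s" "s < pp" by fact+
    show "FF (bb y) = y" if "0 < y" "y < pp" for y using base_ex[of y] that by simp
    show "isCont bb s"
      using base_cont assms continuous_on_interior[of "{0..pp}" bb s] by simp
  qed
  then show ?thesis using f_eq[of "bb s"] y by simp
qed

end

context gs begin

abbreviation "PP \<equiv> pi_gen a"
abbreviation "Sh \<equiv> sin_gen_half a"
abbreviation "SS \<equiv> sin_gen a"

lemma PP_pos: "0 < PP" using PP_eq p_pos by simp

lemma Sh_eq: "Sh t = (if t \<le> pp then bb t else bb (PP - t))"
  unfolding sin_gen_half_def using PP_eq by simp

lemma Sh_sym: "Sh (PP - t) = Sh t"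
  unfolding Sh_eq using PP_eq by auto

lemma Sh_0: "Sh 0 = 0"
  unfolding Sh_eq using p_pos base_0 by simp

lemma Sh_PP: "Sh PP = 0"
  using Sh_sym[of PP] Sh_0 by simp

lemma S_rep: assumes "-PP \<le> r" "r < PP"
  shows "SS (r + 2*PP* of_int k) = sgn r * Sh \<bar>r\<bar>"
proof -
  have fl: "\<lfloor>(r + 2*PP* of_int k + PP)/(2*PP)\<rfloor> = k"
    by (rule floor_unique) (use PP_pos assms in \<open>auto simp: field_simps\<close>)
  show ?thesis unfolding sin_gen_def Let_def fl by simp
qed

lemma S_local: "-PP \<le> x \<Longrightarrow> x < PP \<Longrightarrow> SS x = sgn x * Sh \<bar>x\<bar>"
  using S_rep[of x 0] by simp

lemma S_anti: "SS (x + PP) = - SS x"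
proof -
  define q where "q = \<lfloor>(x+PP)/(2*PP)\<rfloor>"
  define r where "r = x - 2*PP* of_int q"
  have q1: "of_int q \<le> (x+PP)/(2*PP)" "(x+PP)/(2*PP) < of_int q + 1"
    unfolding q_def by linarith+
  have "2*PP* of_int q \<le> x + PP" "x + PP < 2*PP*(of_int q + 1)"
    using q1 PP_pos by (auto simp: field_simps)
  then have r: "-PP \<le> r" "r < PP" unfolding r_def by (auto simp: algebra_simps)
  have x: "x = r + 2*PP* of_int q" unfolding r_def by simp
  have Sx: "SS x = sgn r * Sh \<bar>r\<bar>" using S_rep[OF r, of q] x by simp
  show ?thesis
  proof (cases "r < 0")
    case True
    have "x + PP = (r + PP) + 2*PP * of_int q" using x by simp
    then have "SS (x + PP) = SS ((r + PP) + 2*PP * of_int q)" by (simp only:)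
    also have "\<dots> = sgn (r + PP) * Sh \<bar>r + PP\<bar>"
      using S_rep[of "r + PP" q] r True by simp
    finally have "SS (x + PP) = sgn (r + PP) * Sh \<bar>r + PP\<bar>" .
    moreover have "Sh \<bar>r + PP\<bar> = Sh \<bar>r\<bar>"
      using Sh_sym[of "-r"] True r by (simp add: add.commute)
    ultimately show ?thesis using Sx True r Sh_PP
      by (cases "r = -PP") (auto simp: sgn_if)
  next
    case False
    have "x + PP = (r - PP) + 2*PP* of_int (q+1)" using x by (simp add: algebra_simps)
    then have "SS (x + PP) = SS ((r - PP) + 2*PP * of_int (q+1))" by (simp only:)
    also have "\<dots> = sgn (r - PP) * Sh \<bar>r - PP\<bar>"
      using S_rep[of "r - PP" "q+1"] r False by simp
    finally have "SS (x + PP) = sgn (r - PP) * Sh \<bar>r - PP\<bar>" .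
    moreover have "Sh \<bar>r - PP\<bar> = Sh r"
      using Sh_sym[of r] False r by simp
    ultimately show ?thesis using Sx False r Sh_0
      by (cases "r = 0") (auto simp: sgn_if)
  qed
qed

lemma S_shift: "SS (x + of_int k * PP) = (if even k then SS x else - SS x)"
proof (induction k rule: int_induct[where k=0])
  case base then show ?case by simp
next
  case (step1 i)
  have "SS (x + of_int (i+1) * PP) = - SS (x + of_int i * PP)"
    using S_anti[of "x + of_int i * PP"] by (simp add: algebra_simps)
  then show ?case using step1 by simp
next
  case (step2 i)
  have "SS (x + of_int i * PP) = - SS (x + of_int (i - 1) * PP)"
    using S_anti[of "x + of_int (i - 1) * PP"] by (simp add: algebra_simps)
  then show ?case using step2 by (auto split: if_splits)
qed

lemma pp_lt: "pp < PP" using PP_eq p_pos by simp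

lemma S_pos_side: "0 \<le> x \<Longrightarrow> x \<le> pp \<Longrightarrow> SS x = bb x"
  using S_local[of x] pp_lt base_0 by (cases "x = 0") (auto simp: Sh_eq)

lemma S_neg_side: "-pp \<le> x \<Longrightarrow> x \<le> 0 \<Longrightarrow> SS x = - bb (-x)"
  using S_local[of x] pp_lt base_0 by (cases "x = 0") (auto simp: Sh_eq)

lemma S_far_neg: "-PP < x \<Longrightarrow> x \<le> -pp \<Longrightarrow> SS x = - bb (PP + x)"
proof -
  assume x: "-PP < x" "x \<le> -pp"
  show ?thesis
  proof (cases "x = -pp")
    case True then show ?thesis using S_local[of x] pp_lt PP_eq p_pos by (auto simp: Sh_eq)
  next
    case False then show ?thesis using x S_local[of x] pp_lt PP_eq p_pos by (auto simp: Sh_eq)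
  qed
qed

lemma S_odd: "-PP < x \<Longrightarrow> x < PP \<Longrightarrow> SS (-x) = - SS x"
  using S_local[of x] S_local[of "-x"] by (simp add: sgn_minus)

end

context gs begin

definition C0 :: "real \<Rightarrow> real" where
  "C0 t = sqrt (1 - \<bar>SS t\<bar> powr (2*a))"


lemma cont_0: "isCont SS 0"
proof -
  have c: "continuous_on ({-pp..0} \<union> {0..pp}) (\<lambda>t. if t \<le> 0 then - bb (-t) else bb t)"
  proof (rule continuous_on_cases)
    show "continuous_on {-pp..0} (\<lambda>t. - bb (-t))"
      by (intro continuous_intros continuous_on_compose2[OF base_cont]) auto
    show "continuous_on {0..pp} bb" by (rule base_cont)
  qed (auto simp: base_0)
  have e: "{-pp..0} \<union> {0..pp} = {-pp..pp}" by auto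
  have "continuous_on {-pp..pp} SS"
    by (rule continuous_on_eq[OF c[unfolded e]]) (auto simp: S_pos_side S_neg_side)
  then show ?thesis
    using continuous_on_interior[of "{-pp..pp}" SS 0] p_pos by simp
qed

lemma cont_mpp: "isCont SS (-pp)"
proof -
  have c: "continuous_on ({-3*pp/2..-pp} \<union> {-pp..0}) (\<lambda>t. if t \<le> -pp then - bb (PP + t) else - bb (-t))"
  proof (rule continuous_on_cases)
    show "continuous_on {-pp..0} (\<lambda>t. - bb (-t))"
      by (intro continuous_intros continuous_on_compose2[OF base_cont]) auto
    show "continuous_on {-3*pp/2..-pp} (\<lambda>t. - bb (PP + t))"
      by (intro continuous_intros continuous_on_compose2[OF base_cont]) (auto simp: PP_eq)
  qed (auto simp: PP_eq)
  have e: "{-3*pp/2..-pp} \<union> {-pp..0} = {-3*pp/2..0}" using p_pos by auto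
  have "continuous_on {-3*pp/2..0} SS"
  proof (rule continuous_on_eq[OF c[unfolded e]])
    fix t assume t: "t \<in> {-3*pp/2..0}"
    show "(if t \<le> -pp then - bb (PP + t) else - bb (-t)) = SS t"
      using t S_far_neg[of t] S_neg_side[of t] PP_eq p_pos by auto
  qed
  then show ?thesis
    using continuous_on_interior[of "{-3*pp/2..0}" SS "-pp"] p_pos by simp
qed

lemma red_bounds: "-pp \<le> x - of_int \<lfloor>(x+pp)/PP\<rfloor> * PP \<and> x - of_int \<lfloor>(x+pp)/PP\<rfloor> * PP < pp"
proof -
  define k where "k = \<lfloor>(x+pp)/PP\<rfloor>"
  have k: "of_int k \<le> (x+pp)/PP" "(x+pp)/PP < of_int k + 1"
    unfolding k_def by linarith+
  have "of_int k * PP \<le> x + pp" "x + pp < (of_int k + 1) * PP"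
    using k PP_pos by (auto simp: field_simps)
  then show ?thesis unfolding k_def[symmetric] using PP_eq by (auto simp: algebra_simps)
qed

lemma S_shift': "SS x = (if even k then SS (x - of_int k * PP) else - SS (x - of_int k * PP))"
  using S_shift[of "x - of_int k * PP" k] by simp

lemma abs_S_shift: "\<bar>SS x\<bar> = \<bar>SS (x - of_int k * PP)\<bar>"
  using S_shift'[of x k] by auto

lemma abs_S_small: "-pp \<le> y \<Longrightarrow> y \<le> pp \<Longrightarrow> \<bar>SS y\<bar> = bb \<bar>y\<bar>"
  using S_pos_side[of y] S_neg_side[of y] base_ex[of "\<bar>y\<bar>"] by (cases "0 \<le> y") auto

lemma abs_S_le1: "\<bar>SS x\<bar> \<le> 1"
proof -
  define y where "y = x - of_int \<lfloor>(x+pp)/PP\<rfloor> * PP"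
  have y: "-pp \<le> y" "y < pp" using red_bounds[of x] unfolding y_def by auto
  have "\<bar>SS x\<bar> = bb \<bar>y\<bar>" using abs_S_shift[of x] abs_S_small[of y] y unfolding y_def by simp
  then show ?thesis using base_ex[of "\<bar>y\<bar>"] y by simp
qed

lemma C0_nonneg: "0 \<le> C0 t"
  unfolding C0_def using powr_le1[of "2*a" "\<bar>SS t\<bar>"] abs_S_le1[of t] a1 by simp

lemma der_pos: assumes "0 < t" "t < pp" shows "DERIV SS t :> C0 t"
proof -
  have "DERIV SS t :> sqrt (1 - bb t powr (2*a))"
    by (rule has_field_derivative_transform_within_open[OF base_deriv[OF assms], of "{0<..<pp}"])
       (use assms S_pos_side in auto)
  moreover have "C0 t = sqrt (1 - bb t powr (2*a))"
    unfolding C0_def using S_pos_side[of t] base_ex[of t] assms by simp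
  ultimately show ?thesis by simp
qed

lemma der_neg: assumes "-pp < t" "t < 0" shows "DERIV SS t :> C0 t"
proof -
  have "DERIV (\<lambda>t. bb (-t)) t :> sqrt (1 - bb (-t) powr (2*a)) * (-1)"
    by (rule DERIV_chain2[OF base_deriv]) (use assms in \<open>auto intro!: derivative_eq_intros\<close>)
  then have "DERIV (\<lambda>t. - bb (-t)) t :> sqrt (1 - bb (-t) powr (2*a))"
    using DERIV_minus by fastforce
  then have "DERIV SS t :> sqrt (1 - bb (-t) powr (2*a))"
    by (rule has_field_derivative_transform_within_open[of _ _ _ "{-pp<..<0}"])
       (use assms S_neg_side in auto)
  moreover have "C0 t = sqrt (1 - bb (-t) powr (2*a))"
    unfolding C0_def using S_neg_side[of t] base_ex[of "-t"] assms by simp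
  ultimately show ?thesis by simp
qed

lemma der_far: assumes "-PP < t" "t < -pp" shows "DERIV SS t :> - C0 t"
proof -
  have "DERIV (\<lambda>t. bb (PP + t)) t :> sqrt (1 - bb (PP + t) powr (2*a)) * 1"
    by (rule DERIV_chain2[OF base_deriv]) (use assms PP_eq in \<open>auto intro!: derivative_eq_intros\<close>)
  then have "DERIV (\<lambda>t. - bb (PP + t)) t :> - sqrt (1 - bb (PP + t) powr (2*a))"
    using DERIV_minus by fastforce
  then have "DERIV SS t :> - sqrt (1 - bb (PP + t) powr (2*a))"
    by (rule has_field_derivative_transform_within_open[of _ _ _ "{-PP<..<-pp}"])
       (use assms S_far_neg in auto)
  moreover have "C0 t = sqrt (1 - bb (PP + t) powr (2*a))"
    unfolding C0_def using S_far_neg[of t] base_ex[of "PP + t"] assms PP_eq by simp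
  ultimately show ?thesis by simp
qed

lemma C0_tendsto: assumes "isCont SS x" shows "(C0 \<longlongrightarrow> C0 x) (at x)"
proof -
  have "((\<lambda>t. \<bar>SS t\<bar>) \<longlongrightarrow> \<bar>SS x\<bar>) (at x)"
    by (rule tendsto_rabs[OF isContD[OF assms]])
  then have "((\<lambda>t. \<bar>SS t\<bar> powr (2*a)) \<longlongrightarrow> \<bar>SS x\<bar> powr (2*a)) (at x)"
    by (rule tendsto_powr'[OF _ tendsto_const]) (use a1 in auto)
  then have "((\<lambda>t. sqrt (1 - \<bar>SS t\<bar> powr (2*a))) \<longlongrightarrow> sqrt (1 - \<bar>SS x\<bar> powr (2*a))) (at x)"
    by (rule tendsto_real_sqrt[OF tendsto_diff[OF tendsto_const]])
  then show ?thesis unfolding C0_def .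
qed

lemma der_0: "DERIV SS 0 :> C0 0"
proof (rule deriv_limit[OF p_pos cont_0])
  fix t :: real assume "t \<noteq> 0" "\<bar>t - 0\<bar> < pp"
  then show "DERIV SS t :> C0 t" using der_pos[of t] der_neg[of t] by (cases "0 < t") auto
qed (rule C0_tendsto[OF cont_0])

lemma der_mid: "-pp < t \<Longrightarrow> t < pp \<Longrightarrow> DERIV SS t :> C0 t"
  using der_pos[of t] der_neg[of t] der_0 by (cases t "0::real" rule: linorder_cases) auto

lemma C0_mpp: "C0 (-pp) = 0"
  unfolding C0_def using S_neg_side[of "-pp"] base_p p_pos by simp

lemma der_mpp: "DERIV SS (-pp) :> 0"
proof (rule deriv_limit[OF p_pos cont_mpp, where g="\<lambda>t. if t < -pp then - C0 t else C0 t"])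
  fix t :: real assume t: "t \<noteq> -pp" "\<bar>t - -pp\<bar> < pp"
  show "DERIV SS t :> (if t < -pp then - C0 t else C0 t)"
  proof (cases "t < -pp")
    case True then show ?thesis using der_far[of t] t PP_eq by auto
  next
    case False then show ?thesis using der_mid[of t] t by auto
  qed
next
  have "(\<lambda>t. \<bar>if t < -pp then - C0 t else C0 t\<bar>) = C0"
    using C0_nonneg by (auto simp: fun_eq_iff)
  then have "((\<lambda>t. \<bar>if t < -pp then - C0 t else C0 t\<bar>) \<longlongrightarrow> 0) (at (-pp))"
    using C0_tendsto[OF cont_mpp] C0_mpp by simp
  then show "((\<lambda>t. if t < -pp then - C0 t else C0 t) \<longlongrightarrow> 0) (at (-pp))"
    by (rule tendsto_rabs_zero_cancel)
qed

end

context gs begin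

definition Cg :: "real \<Rightarrow> real" where
  "Cg x = (if even \<lfloor>(x+pp)/PP\<rfloor> then 1 else -1) * C0 x"

lemma S_deriv: "DERIV SS x :> Cg x"
proof -
  define k where "k = \<lfloor>(x+pp)/PP\<rfloor>"
  define y where "y = x - of_int k * PP"
  have y: "-pp \<le> y" "y < pp" using red_bounds[of x] unfolding y_def k_def by auto
  have D: "DERIV SS y :> C0 y"
  proof (cases "y = -pp")
    case True then show ?thesis using der_mpp C0_mpp by simp
  next
    case False then show ?thesis using der_mid[of y] y by simp
  qed
  have Dk: "DERIV (\<lambda>t. SS (t - of_int k * PP)) x :> C0 y * 1"
    by (rule DERIV_chain2[where f=SS and g="\<lambda>t. t - of_int k * PP"])
       (use D in \<open>auto simp: y_def intro!: derivative_eq_intros\<close>)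
  have C0xy: "C0 x = C0 y" unfolding C0_def y_def using abs_S_shift[of x k] by simp
  show ?thesis
  proof (cases "even k")
    case True
    have "SS t = SS (t - of_int k * PP)" for t using S_shift'[of t k] True by presburger
    then have "SS = (\<lambda>t. SS (t - of_int k * PP))" by (rule ext)
    then show ?thesis using Dk True C0xy unfolding Cg_def k_def[symmetric] by simp
  next
    case False
    have "SS t = - SS (t - of_int k * PP)" for t using S_shift'[of t k] False by presburger
    then have "SS = (\<lambda>t. - SS (t - of_int k * PP))" by (rule ext)
    moreover have "DERIV (\<lambda>t. - SS (t - of_int k * PP)) x :> - (C0 y * 1)"
      using DERIV_minus[OF Dk] by simp
    ultimately show ?thesis using False C0xy unfolding Cg_def k_def[symmetric] by simp
  qed
qed

lemma cos_eq: "cos_gen a x = Cg x"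
  unfolding cos_gen_def by (rule DERIV_imp_deriv[OF S_deriv])

lemma C0_pos: assumes "-pp < y" "y < pp" shows "0 < C0 y"
proof -
  have "\<bar>SS y\<bar> = bb \<bar>y\<bar>" using abs_S_small[of y] assms by simp
  moreover have "bb \<bar>y\<bar> < 1" "0 \<le> bb \<bar>y\<bar>" using base_lt1[of "\<bar>y\<bar>"] base_ex[of "\<bar>y\<bar>"] assms by auto
  ultimately have "\<bar>SS y\<bar> powr (2*a) < 1" using pw_lt1 by simp
  then show ?thesis unfolding C0_def by simp
qed

lemma floor_red: assumes "x = y + of_int k * PP" "-pp \<le> y" "y < pp"
  shows "\<lfloor>(x+pp)/PP\<rfloor> = k"
  by (rule floor_unique) (use assms PP_pos PP_eq in \<open>auto simp: field_simps\<close>)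

lemma tan_red: assumes "x = y + of_int k * PP" "-pp < y" "y < pp"
  shows "cos_gen a x \<noteq> 0 \<and> tan_gen a x = SS y / C0 y"
proof -
  have fl: "\<lfloor>(x+pp)/PP\<rfloor> = k" using floor_red[of x y k] assms by simp
  have C0xy: "C0 x = C0 y" unfolding C0_def using abs_S_shift[of x k] assms by simp
  have Sx: "SS x = (if even k then SS y else - SS y)" using S_shift'[of x k] assms by simp
  have "0 < C0 y" using C0_pos assms by simp
  then show ?thesis
    unfolding tan_gen_def cos_eq Cg_def fl using C0xy Sx by auto
qed

lemma cos_zero: assumes "x = -pp + of_int k * PP" shows "cos_gen a x = 0"
proof -
  have "C0 x = C0 (-pp)" unfolding C0_def using abs_S_shift[of x k] assms by simp
  then show ?thesis unfolding cos_eq Cg_def using C0_mpp by simp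
qed

definition Hp :: "real \<Rightarrow> real" where "Hp u = u * ff u - FF u"

lemma Hp_le: assumes "0 \<le> u1" "u1 \<le> u2" "u2 < 1"
  shows "Hp u1 + u1 * (ff u2 - ff u1) \<le> Hp u2"
proof -
  have "FF u2 - FF u1 \<le> (u2 - u1) * ff u2" using F_le assms by simp
  moreover have "(u2 - u1) * ff u2 = u2 * ff u2 - u1 * ff u2" by (simp add: algebra_simps)
  moreover have "u1 * (ff u2 - ff u1) = u1 * ff u2 - u1 * ff u1" by (simp add: algebra_simps)
  ultimately show ?thesis unfolding Hp_def by linarith
qed

lemma Hp_strict_pos: assumes "0 < u1" "u1 < u2" "u2 < 1" shows "Hp u1 < Hp u2"
proof -
  have "0 < u1 * (ff u2 - ff u1)" using f_mono[of u1 u2] assms by simp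
  then show ?thesis using Hp_le[of u1 u2] assms by simp
qed

lemma Hp_strict: assumes "0 \<le> u1" "u1 < u2" "u2 < 1" shows "Hp u1 < Hp u2"
proof (cases "u1 = 0")
  case False then show ?thesis using Hp_strict_pos assms by simp
next
  case True
  have "Hp 0 \<le> Hp (u2/2)" using Hp_le[of 0 "u2/2"] assms by simp
  also have "\<dots> < Hp u2" using Hp_strict_pos[of "u2/2" u2] assms by simp
  finally show ?thesis using True by simp
qed

definition hh :: "real \<Rightarrow> real" where "hh y = SS y / C0 y - y"

lemma hh_pos: assumes "0 \<le> y" "y < pp" shows "hh y = Hp (bb y)"
proof -
  have b: "0 \<le> bb y" "bb y < 1" "FF (bb y) = y" using base_ex[of y] base_lt1[of y] assms by auto
  have "C0 y = sqrt (1 - bb y powr (2*a))" unfolding C0_def using S_pos_side[of y] assms b by simp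
  then show ?thesis unfolding hh_def Hp_def using S_pos_side[of y] assms b f_eq[of "bb y"]
    by (simp add: divide_inverse)
qed

lemma hh_odd: assumes "-pp < y" "y < pp" shows "hh (-y) = - hh y"
proof -
  have "SS (-y) = - SS y" using S_odd[of y] assms pp_lt by simp
  moreover have "C0 (-y) = C0 y" unfolding C0_def using calculation by simp
  ultimately show ?thesis unfolding hh_def by simp
qed

lemma hh_0: "hh 0 = 0"
  unfolding hh_def using S_pos_side[of 0] base_0 p_pos by simp

lemma hh_mono_pos: assumes "0 \<le> y1" "y1 < y2" "y2 < pp" shows "hh y1 < hh y2"
proof -
  have "bb y1 < bb y2" using base_mono[of y1 y2] assms by simp
  moreover have "0 \<le> bb y1" "bb y2 < 1" using base_ex[of y1] base_lt1[of y2] assms by auto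
  ultimately show ?thesis using hh_pos[of y1] hh_pos[of y2] Hp_strict assms by simp
qed

lemma hh_mono: assumes "-pp < y1" "y1 < y2" "y2 < pp" shows "hh y1 < hh y2"
proof (cases "0 \<le> y1")
  case True then show ?thesis using hh_mono_pos assms by simp
next
  case False
  show ?thesis
  proof (cases "y2 \<le> 0")
    case True
    have "hh (-y2) < hh (-y1)" using hh_mono_pos[of "-y2" "-y1"] assms True by simp
    then show ?thesis using hh_odd[of y1] hh_odd[of y2] assms by simp
  next
    case False2: False
    have "hh 0 < hh (-y1)" using hh_mono_pos[of 0 "-y1"] assms False by simp
    moreover have "hh 0 < hh y2" using hh_mono_pos[of 0 y2] assms False2 by simp
    ultimately show ?thesis using hh_odd[of y1] assms hh_0 by simp
  qed
qed

end

context gs begin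

lemma main_core:
  assumes "0 \<le> \<phi>" "\<phi> < 2 * PP" "\<phi> \<noteq> PP / 2" "\<phi> \<noteq> 3 * PP / 2"
  shows "{\<zeta>. \<bar>\<zeta>\<bar> < PP \<and> cos_gen a (\<zeta> + \<phi>) \<noteq> 0
              \<and> tan_gen a (\<zeta> + \<phi>) - tan_gen a \<phi> = \<zeta>} = {0}"
proof -
  define k0 where "k0 = \<lfloor>(\<phi>+pp)/PP\<rfloor>"
  define y0 where "y0 = \<phi> - of_int k0 * PP"
  have y0: "-pp \<le> y0" "y0 < pp" using red_bounds[of \<phi>] unfolding y0_def k0_def by auto
  have phi: "\<phi> = y0 + of_int k0 * PP" unfolding y0_def by simp
  have y0ne: "y0 \<noteq> -pp"
  proof
    assume eq: "y0 = -pp"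
    then have pe: "\<phi> = of_int (2*k0 - 1) * pp" using phi PP_eq by (simp add: algebra_simps)
    then have "0 \<le> of_int (2*k0 - 1) * pp" using assms by simp
    then have "0 \<le> (of_int (2*k0 - 1)::real)" using p_pos by (simp add: zero_le_mult_iff)
    then have k1: "1 \<le> k0" by simp
    have "of_int (2*k0 - 1) * pp < 4 * pp" using pe assms PP_eq by simp
    then have "(of_int (2*k0 - 1)::real) < 4" using p_pos by simp
    then have k2: "k0 \<le> 2" by simp
    have "k0 = 1 \<or> k0 = 2" using k1 k2 by auto
    then show False using pe assms PP_eq by auto
  qed
  have y0': "-pp < y0" using y0 y0ne by simp
  have tphi: "cos_gen a \<phi> \<noteq> 0" "tan_gen a \<phi> = SS y0 / C0 y0"
    using tan_red[OF phi y0' y0(2)] by auto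
  show ?thesis
  proof (intro equalityI subsetI)
    fix z assume "z \<in> {0::real}"
    then show "z \<in> {\<zeta>. \<bar>\<zeta>\<bar> < PP \<and> cos_gen a (\<zeta> + \<phi>) \<noteq> 0 \<and> tan_gen a (\<zeta> + \<phi>) - tan_gen a \<phi> = \<zeta>}"
      using tphi PP_pos by simp
  next
    fix z assume "z \<in> {\<zeta>. \<bar>\<zeta>\<bar> < PP \<and> cos_gen a (\<zeta> + \<phi>) \<noteq> 0 \<and> tan_gen a (\<zeta> + \<phi>) - tan_gen a \<phi> = \<zeta>}"
    then have z: "\<bar>z\<bar> < PP" "cos_gen a (z + \<phi>) \<noteq> 0" "tan_gen a (z + \<phi>) - tan_gen a \<phi> = z" by auto
    define k where "k = \<lfloor>(z + \<phi> + pp)/PP\<rfloor>"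
    define y where "y = z + \<phi> - of_int k * PP"
    have y: "-pp \<le> y" "y < pp" using red_bounds[of "z + \<phi>"] unfolding y_def k_def by auto
    have zp: "z + \<phi> = y + of_int k * PP" unfolding y_def by simp
    have "y \<noteq> -pp" using cos_zero[of "z + \<phi>" k] zp z(2) by auto
    then have y': "-pp < y" using y by simp
    have tz: "tan_gen a (z + \<phi>) = SS y / C0 y" using tan_red[OF zp y' y(2)] by auto
    define m where "m = k - k0"
    have zeq: "z = y - y0 + of_int m * PP" using zp phi unfolding m_def by (simp add: algebra_simps)
    have heq: "hh y - hh y0 = of_int m * PP"
      using z(3) tz tphi zeq unfolding hh_def by simp
    have "m = 0"
    proof (rule ccontr)
      assume "m \<noteq> 0"
      then consider "1 \<le> m" | "m \<le> -1" by linarith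
      then show False
      proof cases
        case 1
        then have "PP \<le> of_int m * PP" using PP_pos by simp
        then have "hh y0 < hh y" using heq PP_pos by linarith
        then have "y0 < y" using hh_mono[of y y0] y' y0' y(2) y0(2) by (cases y y0 rule: linorder_cases) auto
        moreover have "z < PP" using z(1) by (simp add: abs_less_iff)
        ultimately show False using zeq \<open>PP \<le> of_int m * PP\<close> by linarith
      next
        case 2
        then have "(of_int m :: real) \<le> -1" by simp
        then have "of_int m * PP \<le> - PP" using mult_right_mono[of "of_int m" "-1" PP] PP_pos by simp
        then have "hh y < hh y0" using heq PP_pos by linarith
        then have "y < y0" using hh_mono[of y0 y] y' y0' y(2) y0(2) by (cases y y0 rule: linorder_cases) auto
        moreover have "-PP < z" using z(1) by (simp add: abs_less_iff)
        ultimately show False using zeq \<open>of_int m * PP \<le> - PP\<close> by linarith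
      qed
    qed
    then have "hh y = hh y0" using heq by simp
    then have "y = y0" using hh_mono[of y y0] hh_mono[of y0 y] y' y0' y(2) y0(2)
      by (cases y y0 rule: linorder_cases) auto
    then show "z \<in> {0}" using zeq \<open>m = 0\<close> by simp
  qed
qed

end

theorem mainTheorem9:
  fixes a \<phi> :: real
  assumes "a \<ge> 1"
    and "0 \<le> \<phi>" and "\<phi> < 2 * pi_gen a"
    and "\<phi> \<noteq> pi_gen a / 2" and "\<phi> \<noteq> 3 * pi_gen a / 2"
  shows "{\<zeta>. \<bar>\<zeta>\<bar> < pi_gen a \<and> cos_gen a (\<zeta> + \<phi>) \<noteq> 0
              \<and> tan_gen a (\<zeta> + \<phi>) - tan_gen a \<phi> = \<zeta>} = {0}"
proof -
  interpret gs a by unfold_locales (rule assms(1))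
  show ?thesis using main_core assms(2-5) by blast
qed

end
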